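(* Let $\xi(t)=(\xi_1(t),\dots,\xi_d(t))$, $t\geq 0$, be a continuous path in $\mathbb{R}^d$ such that the integrals $\int_0^t\xi(s)ds$ and $\int_0^t|\xi(s)|ds$ exist for all $t\geq0$. For $\nu\geq1$ and $1\leq i_1,\dots,i_\nu\leq d$ define \[ \Sigma^{i_1,\dots,i_\nu}(t)=\int_{0\leq s_1\leq\dots\leq s_\nu\leq t}\xi_{i_1}(s_1)\cdots\xi_{i_\nu}(s_\nu)\,ds_1\cdots ds_\nu . \] Suppose that \[ \limsup_{t\to\infty} t^{-1}\int_{0}^t|\xi(s)|ds=R<\infty \] and that the limit \[ \lim_{t\to\infty}t^{-1}\int_{0}^t\xi(s)ds=Q=(Q_1,\dots,Q_d) \] exists with $|Q|<\infty$. Then for any $\nu\geq 1$ and $1\leq i_1,\dots,i_\nu\leq d$, \[ \lim_{t\to\infty}t^{-\nu}\Sigma^{i_1,\dots,i_\nu}(t)=\frac 1{\nu !}\prod_{j=1}^\nu Q_{i_j}. \]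
   Context: $|\cdot|$ denotes the Euclidean norm on $\mathbb{R}^d$. *)

theory Defs
  imports "HOL-Analysis.Analysis"
begin

definition ord_simplex :: "nat \<Rightarrow> real \<Rightarrow> (nat \<Rightarrow> real) set" where
  "ord_simplex n t = {s \<in> space (PiM {..<n} (\<lambda>_. lborel)).
      (\<forall>j<n. 0 \<le> s j \<and> s j \<le> t) \<and> (\<forall>j. Suc j < n \<longrightarrow> s j \<le> s (Suc j))}"

definition Sigma :: "(real \<Rightarrow> real ^ 'd) \<Rightarrow> 'd list \<Rightarrow> real \<Rightarrow> real" where
  "Sigma \<xi> is t = (LINT s : ord_simplex (length is) t | PiM {..<length is} (\<lambda>_. lborel).
      (\<Prod>j<length is. \<xi> (s j) $ (is ! j)))"

end

theory Submission
  imports Defs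
begin


fun Iter :: "(nat \<Rightarrow> real \<Rightarrow> real) \<Rightarrow> nat \<Rightarrow> real \<Rightarrow> real" where
  "Iter f 0 t = 1"
| "Iter f (Suc n) t = integral {0..t} (\<lambda>s. f n s * Iter f n s)"

lemma deriv_int:
  fixes \<phi> :: "real \<Rightarrow> real"
  assumes "continuous_on UNIV \<phi>" "t > 0"
  shows "((\<lambda>x. integral {0..x} \<phi>) has_real_derivative \<phi> t) (at t)"
proof -
  have "((\<lambda>x. integral {0..x} \<phi>) has_real_derivative \<phi> t) (at t within {0..t+1})"
    by (rule integral_has_real_derivative[OF continuous_on_subset[OF assms(1) subset_UNIV]]) (use assms in simp)
  moreover have "at t within {0..t+1} = at t"
    by (rule at_within_interior) (use assms in simp)
  ultimately show ?thesis by simp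
qed

lemma lemT:
  fixes h :: "real \<Rightarrow> real"
  assumes hc: "continuous_on UNIV h"
    and lim: "((\<lambda>t. integral {0..t} h / t) \<longlongrightarrow> q) at_top"
  shows "((\<lambda>t. integral {0..t} (\<lambda>s. h s * s ^ n) / t ^ Suc n) \<longlongrightarrow> q / Suc n) at_top"
proof -
  define F where "F t = integral {0..t} h" for t
  define G where "G t = integral {0..t} (\<lambda>s. h s * s ^ n)" for t
  define P where "P t = F t * t ^ n - G t" for t
  have hc2: "continuous_on UNIV (\<lambda>s. h s * s ^ n)"
    by (intro continuous_intros hc)
  have dP: "(P has_real_derivative F t * (real n * t ^ (n - 1))) (at t)" if "t > 0" for t
  proof -
    have dF: "(F has_real_derivative h t) (at t)" unfolding F_def[abs_def] by (rule deriv_int[OF hc that])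
    have dG: "(G has_real_derivative h t * t ^ n) (at t)" unfolding G_def[abs_def] by (rule deriv_int[OF hc2 that])
    have "((\<lambda>z. F z * z ^ n) has_real_derivative h t * t ^ n + F t * (real n * t ^ (n - Suc 0))) (at t)"
      using DERIV_mult[OF dF DERIV_pow[of n t]] by (simp add: mult.commute)
    from DERIV_diff[OF this dG]
    have "(P has_real_derivative (h t * t ^ n + F t * (real n * t ^ (n - Suc 0))) - h t * t ^ n) (at t)"
      unfolding P_def[abs_def] .
    then show ?thesis by simp
  qed
  have limP: "((\<lambda>t. P t / t ^ Suc n) \<longlongrightarrow> real n / Suc n * q) at_top"
  proof (rule lhospital_at_top_at_top[where f' = "\<lambda>t. F t * (real n * t ^ (n - 1))"
        and g' = "\<lambda>t. real (Suc n) * t ^ n"])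
    show "filterlim (\<lambda>t::real. t ^ Suc n) at_top at_top"
      by (intro filterlim_pow_at_top filterlim_ident) simp
    show "\<forall>\<^sub>F x in at_top. real (Suc n) * x ^ n \<noteq> 0"
      using eventually_gt_at_top[of 0] by eventually_elim simp
    show "\<forall>\<^sub>F x in at_top. (P has_real_derivative F x * (real n * x ^ (n - 1))) (at x)"
      using eventually_gt_at_top[of 0] by eventually_elim (rule dP)
    show "\<forall>\<^sub>F x in at_top. ((\<lambda>t. t ^ Suc n) has_real_derivative real (Suc n) * x ^ n) (at x)"
      by (intro always_eventually allI) (use DERIV_pow[of "Suc n"] in simp)
    have "((\<lambda>t. real n / Suc n * (F t / t)) \<longlongrightarrow> real n / Suc n * q) at_top"
      using lim unfolding F_def by (intro tendsto_intros)
    moreover have "\<forall>\<^sub>F t in at_top. real n / Suc n * (F t / t) = F t * (real n * t ^ (n - 1)) / (real (Suc n) * t ^ n)"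
      using eventually_gt_at_top[of 0]
    proof eventually_elim
      case (elim t)
      show ?case
      proof (cases n)
        case 0 then show ?thesis by simp
      next
        case (Suc m)
        have "t ^ m > 0" using elim by simp
        then have "F t * (real n * t ^ m) / (real (Suc n) * (t * t ^ m)) = real n / real (Suc n) * (F t / t)"
          using elim by simp
        then show ?thesis using Suc by simp
      qed
    qed
    ultimately show "((\<lambda>t. F t * (real n * t ^ (n - 1)) / (real (Suc n) * t ^ n)) \<longlongrightarrow> real n / Suc n * q) at_top"
      by (rule Lim_transform_eventually)
  qed
  have lim1: "((\<lambda>t. F t / t - P t / t ^ Suc n) \<longlongrightarrow> q - real n / Suc n * q) at_top"
    by (rule tendsto_diff[OF lim[folded F_def] limP])
  have qq: "q - real n / Suc n * q = q / Suc n"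
    by (simp add: field_simps)
  have ev: "\<forall>\<^sub>F t in at_top. F t / t - P t / t ^ Suc n = G t / t ^ Suc n"
    using eventually_gt_at_top[of 0]
  proof eventually_elim
    case (elim t)
    have tn: "t ^ n > 0" using elim by simp
    have "F t * t ^ n / t ^ Suc n = F t / t" using tn elim by simp
    then show ?case unfolding P_def diff_divide_distrib by simp
  qed
  from Lim_transform_eventually[OF lim1[unfolded qq] ev] show ?thesis unfolding G_def .
qed

lemma lemE:
  fixes h e :: "real \<Rightarrow> real"
  assumes hc: "continuous_on UNIV h" and ec: "\<And>b. continuous_on {0..b} e" and n: "n \<ge> 1"
    and hb: "eventually (\<lambda>t. integral {0..t} (\<lambda>s. \<bar>h s\<bar>) \<le> C * t) at_top"
    and el: "((\<lambda>s. e s / s ^ n) \<longlongrightarrow> 0) at_top"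
  shows "((\<lambda>t. integral {0..t} (\<lambda>s. h s * e s) / t ^ Suc n) \<longlongrightarrow> 0) at_top"
  unfolding tendsto_iff dist_real_def
proof (intro allI impI)
  fix \<epsilon> :: real assume ep: "\<epsilon> > 0"
  define C' where "C' = \<bar>C\<bar> + 1"
  have C': "C' > 0" "C \<le> C'" unfolding C'_def by auto
  define \<delta> where "\<delta> = \<epsilon> / (2 * C')"
  have dpos: "\<delta> > 0" using ep C' unfolding \<delta>_def by auto
  have "eventually (\<lambda>s. \<bar>e s / s ^ n - 0\<bar> < \<delta>) at_top"
    using el dpos unfolding tendsto_iff dist_real_def by blast
  then have "eventually (\<lambda>s. \<bar>e s / s ^ n\<bar> < \<delta> \<and> s \<ge> 1 \<and> integral {0..s} (\<lambda>s. \<bar>h s\<bar>) \<le> C * s) at_top"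
    using hb eventually_ge_at_top[of 1] by eventually_elim auto
  then obtain T1 where T1: "\<And>s. s \<ge> T1 \<Longrightarrow> \<bar>e s / s ^ n\<bar> < \<delta> \<and> s \<ge> 1 \<and> integral {0..s} (\<lambda>s. \<bar>h s\<bar>) \<le> C * s"
    unfolding eventually_at_top_linorder by blast
  have T1ge: "T1 \<ge> 1" using T1[of T1] by simp
  have "bounded (e ` {0..T1})"
    by (intro compact_imp_bounded compact_continuous_image ec compact_Icc)
  then obtain K where K: "\<And>s. s \<in> {0..T1} \<Longrightarrow> \<bar>e s\<bar> \<le> K"
    unfolding bounded_real by blast
  have K0: "K \<ge> 0" using K[of 0] T1ge by force
  show "eventually (\<lambda>t. \<bar>integral {0..t} (\<lambda>s. h s * e s) / t ^ Suc n - 0\<bar> < \<epsilon>) at_top"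
    unfolding eventually_at_top_linorder
  proof (intro exI allI impI)
    fix t assume t: "t \<ge> max T1 (2 * K * C' / \<epsilon> + 1)"
    then have tT1: "t \<ge> T1" and t1: "t \<ge> 1" and tK: "t > 2 * K * C' / \<epsilon>" using T1ge by auto
    have tpos: "t > 0" using t1 by simp
    have ecs: "continuous_on {0..t} e" by (rule ec)
    have hcs: "continuous_on {0..t} h" using hc by (rule continuous_on_subset) simp
    have int1: "(\<lambda>s. h s * e s) integrable_on {0..t}"
      by (intro integrable_continuous_interval continuous_intros ecs hcs)
    have int2: "(\<lambda>s. \<bar>h s\<bar>) integrable_on {0..t}"
      by (intro integrable_continuous_interval continuous_intros hcs)
    have int3: "(\<lambda>s. \<bar>h s\<bar> * (K + \<delta> * t ^ n)) integrable_on {0..t}"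
      by (intro integrable_continuous_interval continuous_intros hcs)
    have pt: "\<bar>e s\<bar> \<le> K + \<delta> * t ^ n" if s: "s \<in> {0..t}" for s
    proof (cases "s \<le> T1")
      case True
      then have "\<bar>e s\<bar> \<le> K" using K s by auto
      moreover have "\<delta> * t ^ n \<ge> 0" using dpos tpos by simp
      ultimately show ?thesis by linarith
    next
      case False
      then have "\<bar>e s / s ^ n\<bar> < \<delta>" "s \<ge> 1" using T1[of s] by auto
      then have "\<bar>e s\<bar> < \<delta> * s ^ n" by (simp add: abs_div divide_less_eq)
      also have "\<dots> \<le> \<delta> * t ^ n" using s \<open>s \<ge> 1\<close> dpos by (intro mult_left_mono power_mono) auto
      finally show ?thesis using K0 by linarith
    qed
    have "\<bar>integral {0..t} (\<lambda>s. h s * e s)\<bar> \<le> integral {0..t} (\<lambda>s. \<bar>h s\<bar> * (K + \<delta> * t ^ n))"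
      using integral_norm_bound_integral[OF int1 int3] pt
      by (simp add: abs_mult mult_left_mono)
    also have "\<dots> = integral {0..t} (\<lambda>s. \<bar>h s\<bar>) * (K + \<delta> * t ^ n)"
      by (rule integral_mult_left)
    also have "\<dots> \<le> (C' * t) * (K + \<delta> * t ^ n)"
    proof (rule mult_right_mono)
      show "integral {0..t} (\<lambda>s. \<bar>h s\<bar>) \<le> C' * t"
        using T1[OF tT1] C' tpos by (smt (verit) mult_right_mono)
      show "0 \<le> K + \<delta> * t ^ n" using K0 dpos tpos by simp
    qed
    finally have bnd: "\<bar>integral {0..t} (\<lambda>s. h s * e s)\<bar> \<le> C' * t * (K + \<delta> * t ^ n)" .
    have tn: "t ^ n \<ge> t" using t1 n by (metis power_increasing power_one_right)
    have "\<bar>integral {0..t} (\<lambda>s. h s * e s) / t ^ Suc n\<bar> \<le> C' * t * (K + \<delta> * t ^ n) / t ^ Suc n"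
    proof -
      have "\<bar>integral {0..t} (\<lambda>s. h s * e s) / t ^ Suc n\<bar> = \<bar>integral {0..t} (\<lambda>s. h s * e s)\<bar> / t ^ Suc n"
        using tpos by (simp add: abs_div)
      also have "\<dots> \<le> C' * t * (K + \<delta> * t ^ n) / t ^ Suc n"
        using tpos by (intro divide_right_mono bnd) simp
      finally show ?thesis .
    qed
    also have "\<dots> = C' * K / t ^ n + C' * \<delta>"
      using tpos by (simp add: field_simps)
    also have "C' * \<delta> = \<epsilon> / 2" unfolding \<delta>_def using C' by simp
    also have "C' * K / t ^ n \<le> C' * K / t"
      using tn tpos C' K0 by (intro divide_left_mono) auto
    also have "C' * K / t < \<epsilon> / 2"
      using tK tpos ep by (simp add: field_simps)
    finally show "\<bar>integral {0..t} (\<lambda>s. h s * e s) / t ^ Suc n - 0\<bar> < \<epsilon>" by simp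
  qed
qed


lemma Iter_cont:
  assumes fc: "\<And>j. continuous_on UNIV (f j)"
  shows "continuous_on {0..b} (Iter f n)"
proof (induction n arbitrary: b)
  case 0
  then show ?case by simp
next
  case (Suc n)
  have "(\<lambda>s. f n s * Iter f n s) integrable_on {0..b}"
    by (intro integrable_continuous_interval continuous_intros Suc continuous_on_subset[OF fc]) simp
  then show ?case by (simp add: indefinite_integral_continuous_1)
qed

lemma lemM:
  assumes fc: "\<And>j. continuous_on UNIV (f j)"
    and fl: "\<And>j. ((\<lambda>t. integral {0..t} (f j) / t) \<longlongrightarrow> q j) at_top"
    and fb: "\<And>j. \<exists>C. eventually (\<lambda>t. integral {0..t} (\<lambda>s. \<bar>f j s\<bar>) \<le> C * t) at_top"
  shows "((\<lambda>t. Iter f (Suc m) t / t ^ Suc m) \<longlongrightarrow> (\<Prod>j<Suc m. q j) / fact (Suc m)) at_top"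
proof (induction m)
  case 0
  show ?case using lemT[OF fc fl, of 0 0] by simp
next
  case (Suc m)
  define n where "n = Suc m"
  define c where "c = (\<Prod>j<n. q j) / fact n"
  have IH: "((\<lambda>t. Iter f n t / t ^ n) \<longlongrightarrow> c) at_top"
    using Suc.IH unfolding n_def c_def .
  define e where "e s = Iter f n s - c * s ^ n" for s
  have ec: "continuous_on {0..b} e" for b
    unfolding e_def by (intro continuous_intros Iter_cont fc)
  have el: "((\<lambda>s. e s / s ^ n) \<longlongrightarrow> 0) at_top"
  proof -
    have "((\<lambda>s. Iter f n s / s ^ n - c) \<longlongrightarrow> c - c) at_top"
      using IH by (intro tendsto_intros)
    moreover have "\<forall>\<^sub>F s in at_top. Iter f n s / s ^ n - c = e s / s ^ n"
      using eventually_gt_at_top[of 0]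
      by eventually_elim (simp add: e_def diff_divide_distrib)
    ultimately show ?thesis by (simp add: Lim_transform_eventually)
  qed
  obtain C where C: "eventually (\<lambda>t. integral {0..t} (\<lambda>s. \<bar>f n s\<bar>) \<le> C * t) at_top"
    using fb by blast
  have E: "((\<lambda>t. integral {0..t} (\<lambda>s. f n s * e s) / t ^ Suc n) \<longlongrightarrow> 0) at_top"
    by (rule lemE[OF fc ec _ C el]) (simp add: n_def)
  have T: "((\<lambda>t. integral {0..t} (\<lambda>s. f n s * s ^ n) / t ^ Suc n) \<longlongrightarrow> q n / Suc n) at_top"
    by (rule lemT[OF fc fl])
  have L: "((\<lambda>t. c * (integral {0..t} (\<lambda>s. f n s * s ^ n) / t ^ Suc n) + integral {0..t} (\<lambda>s. f n s * e s) / t ^ Suc n)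
      \<longlongrightarrow> c * (q n / Suc n) + 0) at_top"
    by (rule tendsto_add[OF tendsto_mult[OF tendsto_const T] E])
  have eq: "Iter f (Suc n) t = c * integral {0..t} (\<lambda>s. f n s * s ^ n) + integral {0..t} (\<lambda>s. f n s * e s)" for t
  proof -
    have fcs: "continuous_on {0..t} (f n)" by (rule continuous_on_subset[OF fc]) simp
    have i1: "(\<lambda>s. c * (f n s * s ^ n)) integrable_on {0..t}"
      by (intro integrable_continuous_interval continuous_intros fcs)
    have i2: "(\<lambda>s. f n s * e s) integrable_on {0..t}"
      by (intro integrable_continuous_interval continuous_intros fcs ec)
    have "Iter f (Suc n) t = integral {0..t} (\<lambda>s. c * (f n s * s ^ n) + f n s * e s)"
      by (simp add: e_def algebra_simps)
    also have "\<dots> = integral {0..t} (\<lambda>s. c * (f n s * s ^ n)) + integral {0..t} (\<lambda>s. f n s * e s)"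
      by (rule integral_add[OF i1 i2])
    also have "integral {0..t} (\<lambda>s. c * (f n s * s ^ n)) = c * integral {0..t} (\<lambda>s. f n s * s ^ n)"
      by (rule integral_mult_right)
    finally show ?thesis .
  qed
  have val: "c * (q n / Suc n) + 0 = (\<Prod>j<Suc n. q j) / fact (Suc n)"
    unfolding c_def by (simp add: field_simps)
  have "((\<lambda>t. Iter f (Suc n) t / t ^ Suc n) \<longlongrightarrow> (\<Prod>j<Suc n. q j) / fact (Suc n)) at_top"
    using L unfolding val eq by (simp add: add_divide_distrib)
  then show ?case unfolding n_def .
qed



lemma ord_simplex_sets: "ord_simplex n t \<in> sets (PiM {..<n} (\<lambda>_. lborel))"
proof -
  let ?M = "PiM {..<n} (\<lambda>_. lborel :: real measure)"
  have comp: "(\<lambda>s. s j) \<in> borel_measurable ?M" if "j < n" for j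
    using measurable_component_singleton[of j "{..<n}" "\<lambda>_. lborel :: real measure"] that by simp
  have eq: "ord_simplex n t = {s\<in>space ?M. \<forall>j\<in>{..<n}. (Suc j < n \<longrightarrow> s j \<le> s (Suc j)) \<and> (s j \<le> t \<and> 0 \<le> s j)}"
    unfolding ord_simplex_def by auto
  show ?thesis unfolding eq
  proof (rule sets.sets_Collect_finite_All)
    fix j assume j: "j \<in> {..<n}"
    have c0: "{s\<in>space ?M. 0 \<le> s j} \<in> sets ?M"
      by (rule borel_measurable_le[OF borel_measurable_const comp]) (use j in simp)
    have c1: "{s\<in>space ?M. s j \<le> t} \<in> sets ?M"
      by (rule borel_measurable_le[OF comp borel_measurable_const]) (use j in simp)
    have c2: "{s\<in>space ?M. Suc j < n \<longrightarrow> s j \<le> s (Suc j)} \<in> sets ?M"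
    proof (cases "Suc j < n")
      case True
      have "{s\<in>space ?M. s j \<le> s (Suc j)} \<in> sets ?M"
        by (rule borel_measurable_le[OF comp comp]) (use True in simp_all)
      with True show ?thesis by simp
    next
      case False
      then show ?thesis by simp
    qed
    show "{s\<in>space ?M. (Suc j < n \<longrightarrow> s j \<le> s (Suc j)) \<and> (s j \<le> t \<and> 0 \<le> s j)} \<in> sets ?M"
      by (intro sets.sets_Collect_conj c0 c1 c2)
  qed simp
qed

lemma prod_meas:
  fixes f :: "nat \<Rightarrow> real \<Rightarrow> real"
  assumes fc: "\<And>j. continuous_on UNIV (f j)"
  shows "(\<lambda>s. \<Prod>j<n. f j (s j)) \<in> borel_measurable (PiM {..<n} (\<lambda>_. lborel))"
proof -
  have [measurable]: "f j \<in> borel_measurable borel" for j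
    by (rule borel_measurable_continuous_onI[OF fc])
  have *: "(\<lambda>s. f j (s j)) \<in> borel_measurable (PiM {..<n} (\<lambda>_. lborel))" if j: "j \<in> {..<n}" for j
    using j by measurable
  show ?thesis using borel_measurable_prod[of "{..<n}" "\<lambda>j s. f j (s j)", OF *] by simp
qed

lemma chain_mono:
  fixes y :: "nat \<Rightarrow> real"
  assumes "\<forall>j. Suc j < n \<longrightarrow> y j \<le> y (Suc j)" "j \<le> k" "k < n"
  shows "y j \<le> y k"
  using assms(2,3)
proof (induction k)
  case 0 then show ?case by simp
next
  case (Suc k)
  show ?case
  proof (cases "j = Suc k")
    case True then show ?thesis by simp
  next
    case False
    then have "y j \<le> y k" using Suc by auto
    also have "y k \<le> y (Suc k)" using assms(1) Suc.prems by auto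
    finally show ?thesis .
  qed
qed


lemma simplex_integrable:
  fixes f :: "nat \<Rightarrow> real \<Rightarrow> real"
  assumes fc: "\<And>j. continuous_on UNIV (f j)"
  shows "set_integrable (PiM {..<n} (\<lambda>_. lborel)) (ord_simplex n t) (\<lambda>s. \<Prod>j<n. f j (s j))"
proof -
  have "\<exists>K. \<forall>x\<in>{0..t}. \<bar>f j x\<bar> \<le> K" for j
  proof -
    have "bounded (f j ` {0..t})"
      by (intro compact_imp_bounded compact_continuous_image continuous_on_subset[OF fc] compact_Icc) simp
    then show ?thesis unfolding bounded_real by blast
  qed
  then obtain K where K: "\<And>j x. x \<in> {0..t} \<Longrightarrow> \<bar>f j x\<bar> \<le> K j" by metis
  define B where "B = PiE {..<n} (\<lambda>_. {0..t::real})"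
  have Bs: "B \<in> sets (PiM {..<n} (\<lambda>_. lborel))"
    unfolding B_def by (intro sets_PiM_I_finite) auto
  have sub: "ord_simplex n t \<subseteq> B"
    unfolding ord_simplex_def B_def by (auto simp: space_PiM PiE_def)
  have "emeasure (PiM {..<n} (\<lambda>_. lborel)) B = (\<Prod>j<n. emeasure lborel {0..t})"
  proof -
    interpret P: product_sigma_finite "\<lambda>_::nat. lborel :: real measure" by standard
    show ?thesis unfolding B_def by (rule P.emeasure_PiM) auto
  qed
  also have "\<dots> < \<infinity>"
    by (simp add: emeasure_lborel_Icc_eq ennreal_prod_eq_top less_top[symmetric] power_eq_top_ennreal)
  finally have Bfin: "emeasure (PiM {..<n} (\<lambda>_. lborel)) B < \<infinity>" .
  have fin: "emeasure (PiM {..<n} (\<lambda>_. lborel)) (ord_simplex n t) < \<infinity>"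
    using emeasure_mono[OF sub Bs] Bfin by (meson le_less_trans)
  have [measurable]: "ord_simplex n t \<in> sets (PiM {..<n} (\<lambda>_. lborel))"
    by (rule ord_simplex_sets)
  have [measurable]: "(\<lambda>s. \<Prod>j<n. f j (s j)) \<in> borel_measurable (PiM {..<n} (\<lambda>_. lborel))"
    by (rule prod_meas[OF fc])
  show ?thesis
    unfolding set_integrable_def
  proof (rule integrableI_bounded_set[where A = "ord_simplex n t" and B = "\<Prod>j<n. K j"])
    show "ord_simplex n t \<in> sets (PiM {..<n} (\<lambda>_. lborel))" by (rule ord_simplex_sets)
    show "(\<lambda>x. indicator (ord_simplex n t) x *\<^sub>R (\<Prod>j<n. f j (x j))) \<in> borel_measurable (PiM {..<n} (\<lambda>_. lborel))"
      by measurable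
    show "emeasure (PiM {..<n} (\<lambda>_. lborel)) (ord_simplex n t) < \<infinity>" by (rule fin)
    show "AE x in PiM {..<n} (\<lambda>_. lborel). x \<notin> ord_simplex n t \<longrightarrow> indicator (ord_simplex n t) x *\<^sub>R (\<Prod>j<n. f j (x j)) = 0"
      by (intro AE_I2) simp
    show "AE x in PiM {..<n} (\<lambda>_. lborel). x \<in> ord_simplex n t \<longrightarrow>
        norm (indicator (ord_simplex n t) x *\<^sub>R (\<Prod>j<n. f j (x j))) \<le> (\<Prod>j<n. K j)"
    proof (intro AE_I2 impI)
      fix x assume x: "x \<in> ord_simplex n t"
      then have xj: "x j \<in> {0..t}" if "j < n" for j
        using that unfolding ord_simplex_def by auto
      have "norm (indicator (ord_simplex n t) x *\<^sub>R (\<Prod>j<n. f j (x j))) = (\<Prod>j<n. \<bar>f j (x j)\<bar>)"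
        using x by (simp add: abs_prod)
      also have "\<dots> \<le> (\<Prod>j<n. K j)"
        by (intro prod_mono conjI abs_ge_zero K xj) auto
      finally show "norm (indicator (ord_simplex n t) x *\<^sub>R (\<Prod>j<n. f j (x j))) \<le> (\<Prod>j<n. K j)" .
    qed
  qed
qed

lemma integral_insert_rev:
  fixes \<Phi> :: "(nat \<Rightarrow> real) \<Rightarrow> real"
  assumes I: "finite I" "i \<notin> I" and int: "integrable (PiM (insert i I) (\<lambda>_. lborel)) \<Phi>"
  shows "integral\<^sup>L (PiM (insert i I) (\<lambda>_. lborel)) \<Phi> =
    (\<integral>z. (\<integral>y. \<Phi> (y(i:=z)) \<partial>PiM I (\<lambda>_. lborel)) \<partial>lborel)"
proof -
  interpret P: product_sigma_finite "\<lambda>_::nat. lborel :: real measure"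
    by standard
  interpret F: finite_product_sigma_finite "\<lambda>_::nat. lborel :: real measure" I
    by standard (use I in auto)
  have [measurable]: "\<Phi> \<in> borel_measurable (PiM (insert i I) (\<lambda>_. lborel))"
    using int by (rule borel_measurable_integrable)
  have upd: "(\<lambda>p. (snd p)(i := fst p)) \<in> measurable (lborel \<Otimes>\<^sub>M PiM I (\<lambda>_. lborel)) (PiM (insert i I) (\<lambda>_. lborel))"
    by (rule measurable_fun_upd[where J = I]) auto
  have gm: "(\<lambda>z. \<integral>y. \<Phi> (y(i:=z)) \<partial>PiM I (\<lambda>_. lborel)) \<in> borel_measurable lborel"
  proof (rule F.borel_measurable_lebesgue_integral)
    show "(\<lambda>(z, y). \<Phi> (y(i := z))) \<in> borel_measurable (lborel \<Otimes>\<^sub>M PiM I (\<lambda>_. lborel))"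
      using measurable_comp[OF upd, of \<Phi> borel] by (simp add: comp_def case_prod_beta)
  qed
  have "integral\<^sup>L (PiM (insert i I) (\<lambda>_. lborel)) \<Phi> = integral\<^sup>L (PiM ({i} \<union> I) (\<lambda>_. lborel)) \<Phi>"
    by simp
  also have "\<dots> = (\<integral>x. (\<integral>y. \<Phi> (merge {i} I (x, y)) \<partial>PiM I (\<lambda>_. lborel)) \<partial>PiM {i} (\<lambda>_. lborel))"
    by (rule P.product_integral_fold) (use I int in auto)
  also have "\<dots> = (\<integral>x. (\<lambda>z. \<integral>y. \<Phi> (y(i:=z)) \<partial>PiM I (\<lambda>_. lborel)) (x i) \<partial>PiM {i} (\<lambda>_. lborel))"
  proof (rule Bochner_Integration.integral_cong[OF refl])
    fix x assume x: "x \<in> space (PiM {i} (\<lambda>_. lborel :: real measure))"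
    show "(\<integral>y. \<Phi> (merge {i} I (x, y)) \<partial>PiM I (\<lambda>_. lborel)) = (\<lambda>z. \<integral>y. \<Phi> (y(i:=z)) \<partial>PiM I (\<lambda>_. lborel)) (x i)"
    proof (rule Bochner_Integration.integral_cong[OF refl])
      fix y assume y: "y \<in> space (PiM I (\<lambda>_. lborel :: real measure))"
      have "merge {i} I (x, y) = y(i := x i)"
        using y I unfolding merge_def by (auto simp: space_PiM PiE_def extensional_def)
      then show "\<Phi> (merge {i} I (x, y)) = \<Phi> (y(i := x i))" by simp
    qed
  qed
  also have "\<dots> = (\<integral>z. (\<integral>y. \<Phi> (y(i:=z)) \<partial>PiM I (\<lambda>_. lborel)) \<partial>lborel)"
    by (rule P.product_integral_singleton[OF gm])
  finally show ?thesis .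
qed


lemma simplex_upd:
  assumes y: "y \<in> space (PiM {..<n} (\<lambda>_. lborel :: real measure))"
  shows "y(n := z) \<in> ord_simplex (Suc n) t \<longleftrightarrow> (0 \<le> z \<and> z \<le> t \<and> y \<in> ord_simplex n z)"
proof -
  have ye: "y k = undefined" if "k \<ge> n" for k
    using y that by (auto simp: space_PiM PiE_def extensional_def)
  have sp: "y(n := z) \<in> space (PiM {..<Suc n} (\<lambda>_. lborel :: real measure))"
    using ye by (auto simp: space_PiM PiE_def extensional_def)
  show ?thesis
  proof
    assume A: "y(n := z) \<in> ord_simplex (Suc n) t"
    then have a1: "\<forall>j<Suc n. 0 \<le> (y(n := z)) j \<and> (y(n := z)) j \<le> t"
      and a2: "\<forall>j. Suc j < Suc n \<longrightarrow> (y(n := z)) j \<le> (y(n := z)) (Suc j)"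
      unfolding ord_simplex_def by auto
    have z: "0 \<le> z" "z \<le> t" using a1[rule_format, of n] by auto
    have "y j \<le> z" if "j < n" for j
      using chain_mono[of "Suc n" "y(n := z)" j n] a2 that by auto
    moreover have "0 \<le> y j" if "j < n" for j using a1[rule_format, of j] that by auto
    moreover have "y j \<le> y (Suc j)" if "Suc j < n" for j using a2[rule_format, of j] that by auto
    ultimately show "0 \<le> z \<and> z \<le> t \<and> y \<in> ord_simplex n z"
      using z y unfolding ord_simplex_def by auto
  next
    assume B: "0 \<le> z \<and> z \<le> t \<and> y \<in> ord_simplex n z"
    then have b1: "\<forall>j<n. 0 \<le> y j \<and> y j \<le> z" and b2: "\<forall>j. Suc j < n \<longrightarrow> y j \<le> y (Suc j)"
      and z: "0 \<le> z" "z \<le> t"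
      unfolding ord_simplex_def by auto
    have "\<forall>j<Suc n. 0 \<le> (y(n := z)) j \<and> (y(n := z)) j \<le> t"
      using b1 z by (auto simp: less_Suc_eq)
    moreover have "\<forall>j. Suc j < Suc n \<longrightarrow> (y(n := z)) j \<le> (y(n := z)) (Suc j)"
    proof (intro allI impI)
      fix j assume j: "Suc j < Suc n"
      show "(y(n := z)) j \<le> (y(n := z)) (Suc j)"
      proof (cases "Suc j = n")
        case True then show ?thesis using b1 by auto
      next
        case False then show ?thesis using b2 j by auto
      qed
    qed
    ultimately show "y(n := z) \<in> ord_simplex (Suc n) t"
      using sp unfolding ord_simplex_def by blast
  qed
qed

lemma Sigma_Iter:
  fixes f :: "nat \<Rightarrow> real \<Rightarrow> real"
  assumes fc: "\<And>j. continuous_on UNIV (f j)"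
  shows "t \<ge> 0 \<Longrightarrow> (LINT s : ord_simplex n t | PiM {..<n} (\<lambda>_. lborel). \<Prod>j<n. f j (s j)) = Iter f n t"
proof (induction n arbitrary: t)
  case 0
  show ?case
    by (simp add: set_lebesgue_integral_def ord_simplex_def PiM_empty lebesgue_integral_count_space_finite)
next
  case (Suc n)
  let ?M = "\<lambda>n. PiM {..<n} (\<lambda>_. lborel :: real measure)"
  define \<Phi> where "\<Phi> s = indicator (ord_simplex (Suc n) t) s *\<^sub>R (\<Prod>j<Suc n. f j (s j))" for s :: "nat \<Rightarrow> real"
  have int: "integrable (PiM (insert n {..<n}) (\<lambda>_. lborel)) \<Phi>"
    using simplex_integrable[OF fc, of "Suc n" t] unfolding set_integrable_def \<Phi>_def lessThan_Suc .
  have cont: "continuous_on {0..t} (\<lambda>z. f n z * Iter f n z)"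
    by (intro continuous_intros Iter_cont fc continuous_on_subset[OF fc]) simp
  have "(LINT s : ord_simplex (Suc n) t | ?M (Suc n). \<Prod>j<Suc n. f j (s j))
      = integral\<^sup>L (PiM (insert n {..<n}) (\<lambda>_. lborel)) \<Phi>"
    unfolding set_lebesgue_integral_def \<Phi>_def lessThan_Suc ..
  also have "\<dots> = (\<integral>z. (\<integral>y. \<Phi> (y(n:=z)) \<partial>?M n) \<partial>lborel)"
    by (rule integral_insert_rev) (use int in auto)
  also have "\<dots> = (\<integral>z. indicator {0..t} z *\<^sub>R (f n z * Iter f n z) \<partial>lborel)"
  proof (rule Bochner_Integration.integral_cong[OF refl])
    fix z :: real
    have "(\<integral>y. \<Phi> (y(n:=z)) \<partial>?M n) =
        (\<integral>y. (indicator {0..t} z * f n z) * (indicator (ord_simplex n z) y *\<^sub>R (\<Prod>j<n. f j (y j))) \<partial>?M n)"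
    proof (rule Bochner_Integration.integral_cong[OF refl])
      fix y assume y: "y \<in> space (?M n)"
      have pr: "(\<Prod>j<Suc n. f j ((y(n := z)) j)) = f n z * (\<Prod>j<n. f j (y j))"
        by (simp add: prod.lessThan_Suc mult.commute)
      show "\<Phi> (y(n:=z)) = (indicator {0..t} z * f n z) * (indicator (ord_simplex n z) y *\<^sub>R (\<Prod>j<n. f j (y j)))"
        unfolding \<Phi>_def pr using simplex_upd[OF y, of z t]
        by (auto simp: indicator_def)
    qed
    also have "\<dots> = (indicator {0..t} z * f n z) * (LINT y : ord_simplex n z | ?M n. \<Prod>j<n. f j (y j))"
      unfolding set_lebesgue_integral_def by (rule integral_mult_right_zero)
    also have "\<dots> = indicator {0..t} z *\<^sub>R (f n z * Iter f n z)"
    proof (cases "z \<in> {0..t}")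
      case True
      then show ?thesis using Suc.IH[of z] by simp
    next
      case False
      then show ?thesis by simp
    qed
    finally show "(\<integral>y. \<Phi> (y(n:=z)) \<partial>?M n) = indicator {0..t} z *\<^sub>R (f n z * Iter f n z)" .
  qed
  also have "\<dots> = (LINT z : {0..t} | lborel. f n z * Iter f n z)"
    unfolding set_lebesgue_integral_def ..
  also have "\<dots> = integral {0..t} (\<lambda>z. f n z * Iter f n z)"
    by (rule set_borel_integral_eq_integral(2)[OF borel_integrable_atLeastAtMost'[OF cont]])
  also have "\<dots> = Iter f (Suc n) t" by simp
  finally show ?case .
qed



theorem theorem2p4:
  fixes \<xi> :: "real \<Rightarrow> real ^ 'd" and Q :: "real ^ 'd" and R :: real and "is" :: "'d list"
  assumes cont: "continuous_on {0..} \<xi>"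
    and int1: "\<And>t. t \<ge> 0 \<Longrightarrow> \<xi> integrable_on {0..t}"
    and int2: "\<And>t. t \<ge> 0 \<Longrightarrow> (\<lambda>s. norm (\<xi> s)) integrable_on {0..t}"
    and limsupR: "Limsup at_top (\<lambda>t. ereal (integral {0..t} (\<lambda>s. norm (\<xi> s)) / t)) = ereal R"
    and limQ: "((\<lambda>t. (1 / t) *\<^sub>R integral {0..t} \<xi>) \<longlongrightarrow> Q) at_top"
    and nu: "length is \<ge> 1"
  shows "((\<lambda>t. Sigma \<xi> is t / t ^ length is)
          \<longlongrightarrow> (\<Prod>j<length is. Q $ (is ! j)) / fact (length is)) at_top"
proof -
  define f where "f j s = \<xi> (max 0 s) $ (is ! j)" for j s
  have fc: "continuous_on UNIV (f j)" for j
  proof -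
    have "continuous_on UNIV (\<lambda>s. \<xi> (max 0 s))"
      by (rule continuous_on_compose2[OF cont]) (auto intro!: continuous_intros)
    then show ?thesis unfolding f_def[abs_def] by (intro continuous_intros)
  qed
  have fint: "integral {0..t} (f j) = integral {0..t} \<xi> $ (is ! j)" if t: "t \<ge> 0" for j t
  proof -
    have "integral {0..t} (f j) = integral {0..t} (\<lambda>s. \<xi> s $ (is ! j))"
      by (rule integral_cong) (simp add: f_def)
    also have "\<dots> = integral {0..t} ((\<lambda>x. x $ (is ! j)) \<circ> \<xi>)" by (simp add: comp_def)
    also have "\<dots> = integral {0..t} \<xi> $ (is ! j)"
      by (rule integral_linear[OF int1[OF t] bounded_linear_vec_nth])
    finally show ?thesis .
  qed
  have fl: "((\<lambda>t. integral {0..t} (f j) / t) \<longlongrightarrow> Q $ (is ! j)) at_top" for j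
  proof -
    have "((\<lambda>t. ((1 / t) *\<^sub>R integral {0..t} \<xi>) $ (is ! j)) \<longlongrightarrow> Q $ (is ! j)) at_top"
      using limQ by (rule tendsto_vec_nth)
    moreover have "\<forall>\<^sub>F t in at_top. ((1 / t) *\<^sub>R integral {0..t} \<xi>) $ (is ! j) = integral {0..t} (f j) / t"
      using eventually_ge_at_top[of 0] by eventually_elim (simp add: fint)
    ultimately show ?thesis by (rule Lim_transform_eventually)
  qed
  have fb: "\<exists>C. eventually (\<lambda>t. integral {0..t} (\<lambda>s. \<bar>f j s\<bar>) \<le> C * t) at_top" for j
  proof (intro exI)
    have "ereal (R + 1) > Limsup at_top (\<lambda>t. ereal (integral {0..t} (\<lambda>s. norm (\<xi> s)) / t))"
      using limsupR by simp
    from Limsup_lessD[OF this]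
    have ev: "\<forall>\<^sub>F t in at_top. integral {0..t} (\<lambda>s. norm (\<xi> s)) / t < R + 1" by simp
    show "\<forall>\<^sub>F t in at_top. integral {0..t} (\<lambda>s. \<bar>f j s\<bar>) \<le> (R + 1) * t"
      using ev eventually_gt_at_top[of 0]
    proof eventually_elim
      case (elim t)
      have "integral {0..t} (\<lambda>s. \<bar>f j s\<bar>) \<le> integral {0..t} (\<lambda>s. norm (\<xi> s))"
      proof (rule integral_le)
        show "(\<lambda>s. \<bar>f j s\<bar>) integrable_on {0..t}"
          by (intro integrable_continuous_interval continuous_intros continuous_on_subset[OF fc]) simp
        show "(\<lambda>s. norm (\<xi> s)) integrable_on {0..t}" using int2 elim by simp
        show "\<bar>f j s\<bar> \<le> norm (\<xi> s)" if "s \<in> {0..t}" for s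
          using that component_le_norm_cart[of "\<xi> s" "is ! j"] by (simp add: f_def)
      qed
      also have "\<dots> \<le> (R + 1) * t"
        using elim by (simp add: divide_less_eq)
      finally show ?case .
    qed
  qed
  obtain m where m: "length is = Suc m" using nu by (cases "length is") auto
  have lim: "((\<lambda>t. Iter f (Suc m) t / t ^ Suc m) \<longlongrightarrow> (\<Prod>j<Suc m. Q $ (is ! j)) / fact (Suc m)) at_top"
    by (rule lemM[OF fc fl fb])
  have eq: "Sigma \<xi> is t = Iter f (length is) t" if t: "t \<ge> 0" for t
  proof -
    have "Sigma \<xi> is t = (LINT s : ord_simplex (length is) t | PiM {..<length is} (\<lambda>_. lborel).
        (\<Prod>j<length is. f j (s j)))"
      unfolding Sigma_def
    proof (rule set_lebesgue_integral_cong[OF ord_simplex_sets], intro allI impI)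
      fix s assume s: "s \<in> ord_simplex (length is) t"
      show "(\<Prod>j<length is. \<xi> (s j) $ (is ! j)) = (\<Prod>j<length is. f j (s j))"
        using s unfolding ord_simplex_def f_def by (intro prod.cong) auto
    qed
    also have "\<dots> = Iter f (length is) t" by (rule Sigma_Iter[OF fc t])
    finally show ?thesis .
  qed
  have "\<forall>\<^sub>F t in at_top. Iter f (Suc m) t / t ^ Suc m = Sigma \<xi> is t / t ^ length is"
    using eventually_ge_at_top[of 0] by eventually_elim (simp add: eq m)
  from Lim_transform_eventually[OF lim this] show ?thesis unfolding m .
qed


end
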